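(* Let $m, N, T$ be positive integers, let $\gamma \in [0,1)$, and let $a_1,\ldots,a_N \in [0,1]$ and $b_1,\ldots,b_N \in [0,1]$ satisfy $\sum_{j=1}^N a_j = 1$ and $\sum_{j=1}^N b_j = 1$. Put $$q(z) = a_1 + a_2 z + \cdots + a_N z^{N-1}, \qquad p(z) = b_1 z + b_2 z^2 + \cdots + b_N z^N,$$ $$\Phi(z) = (1-\gamma)^T \frac{z\,(q(z))^T}{(1-\gamma p(z))^T}.$$ Let $\mu_1,\ldots,\mu_m \in \mathbb{C}$ and consider the polynomial in $\lambda$ $$\tilde f(\lambda) = \prod_{j=1}^m \Big( \big[\lambda^N - \gamma \lambda^N p(\lambda^{-1})\big]^T - (1-\gamma)^T \mu_j \lambda^{T-1} \big[\lambda^{N-1} q(\lambda^{-1})\big]^T \Big).$$ Then all roots of $\tilde f$ lie in the open unit disc $D = \{z \in \mathbb{C} : |z| < 1\}$ if and only if $$\mu_j \in \big(\overline{\mathbb{C}} \setminus \Phi(\overline{D})\big)^*, \qquad j = 1,\ldots,m,$$ where $\overline{D} = \{z \in \mathbb{C} : |z| \le 1\}$.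
   Context: $\overline{\mathbb{C}} = \mathbb{C} \cup \{\infty\}$ denotes the extended complex plane. For a set $S \subseteq \overline{\mathbb{C}}$, $S^* = \{ z^* : z \in S\}$, where the inversion is $z^* = 1/\bar z$ ($\bar z$ the complex conjugate), with the conventions $0^* = \infty$ and $\infty^* = 0$. Here $\lambda^N p(\lambda^{-1})$ and $\lambda^{N-1} q(\lambda^{-1})$ denote the polynomials $b_1\lambda^{N-1} + \cdots + b_N$ and $a_1 \lambda^{N-1} + \cdots + a_N$, respectively. *)

theory Defs
  imports "HOL-Analysis.Analysis" "HOL-Computational_Algebra.Polynomial"
begin

text \<open>Extended complex plane: None represents \<infinity>, Some z the finite point z.\<close>
type_synonym ecomplex = "complex option"

definition ext_inv :: "ecomplex \<Rightarrow> ecomplex" where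
  "ext_inv z = (case z of None \<Rightarrow> Some 0
               | Some w \<Rightarrow> (if w = 0 then None else Some (1 / cnj w)))"

definition qfun :: "nat \<Rightarrow> (nat \<Rightarrow> real) \<Rightarrow> complex \<Rightarrow> complex" where
  "qfun N a z = (\<Sum>j=1..N. complex_of_real (a j) * z ^ (j - 1))"

definition pfun :: "nat \<Rightarrow> (nat \<Rightarrow> real) \<Rightarrow> complex \<Rightarrow> complex" where
  "pfun N b z = (\<Sum>j=1..N. complex_of_real (b j) * z ^ j)"

definition Phi :: "nat \<Rightarrow> nat \<Rightarrow> real \<Rightarrow> (nat \<Rightarrow> real) \<Rightarrow> (nat \<Rightarrow> real) \<Rightarrow> complex \<Rightarrow> complex" where
  "Phi N T \<gamma> a b z = complex_of_real ((1 - \<gamma>) ^ T) * z * (qfun N a z) ^ T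
                       / (1 - complex_of_real \<gamma> * pfun N b z) ^ T"

text \<open>\<lambda>^N p(\<lambda>^{-1}) = b_1 \<lambda>^(N-1) + ... + b_N, as a polynomial\<close>
definition prev_poly :: "nat \<Rightarrow> (nat \<Rightarrow> real) \<Rightarrow> complex poly" where
  "prev_poly N b = (\<Sum>j=1..N. monom (complex_of_real (b j)) (N - j))"

text \<open>\<lambda>^(N-1) q(\<lambda>^{-1}) = a_1 \<lambda>^(N-1) + ... + a_N, as a polynomial\<close>
definition qrev_poly :: "nat \<Rightarrow> (nat \<Rightarrow> real) \<Rightarrow> complex poly" where
  "qrev_poly N a = (\<Sum>j=1..N. monom (complex_of_real (a j)) (N - j))"

definition ftilde :: "nat \<Rightarrow> nat \<Rightarrow> nat \<Rightarrow> real \<Rightarrow> (nat \<Rightarrow> real) \<Rightarrow> (nat \<Rightarrow> real)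
                      \<Rightarrow> (nat \<Rightarrow> complex) \<Rightarrow> complex poly" where
  "ftilde m N T \<gamma> a b \<mu> =
     (\<Prod>j=1..m. (monom 1 N - smult (complex_of_real \<gamma>) (prev_poly N b)) ^ T
                - smult (complex_of_real ((1 - \<gamma>) ^ T) * \<mu> j)
                    (monom 1 (T - 1) * (qrev_poly N a) ^ T))"

end

theory Submission
  imports Defs
begin

definition fac :: "nat \<Rightarrow> nat \<Rightarrow> real \<Rightarrow> (nat \<Rightarrow> real) \<Rightarrow> (nat \<Rightarrow> real) \<Rightarrow> complex \<Rightarrow> complex poly" where
  "fac N T \<gamma> a b u = (monom 1 N - smult (complex_of_real \<gamma>) (prev_poly N b)) ^ T
                - smult (complex_of_real ((1 - \<gamma>) ^ T) * u)
                    (monom 1 (T - 1) * (qrev_poly N a) ^ T)"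

lemma ftilde_fac: "ftilde m N T \<gamma> a b \<mu> = (\<Prod>j=1..m. fac N T \<gamma> a b (\<mu> j))"
  unfolding ftilde_def fac_def by simp

lemma poly_prev:
  assumes "x \<noteq> 0"
  shows "poly (prev_poly N b) x = x ^ N * pfun N b (1 / x)"
proof -
  have "poly (prev_poly N b) x = (\<Sum>j=1..N. complex_of_real (b j) * x ^ (N - j))"
    unfolding prev_poly_def by (simp add: poly_sum poly_monom)
  also have "\<dots> = (\<Sum>j=1..N. x ^ N * (complex_of_real (b j) * (1/x) ^ j))"
  proof (rule sum.cong)
    fix j assume "j \<in> {1..N}"
    then have "x ^ N = x ^ (N - j) * x ^ j" by (simp add: power_add[symmetric])
    then show "complex_of_real (b j) * x ^ (N - j) = x ^ N * (complex_of_real (b j) * (1/x) ^ j)"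
      using assms by (simp add: power_divide field_simps)
  qed simp
  finally show ?thesis unfolding pfun_def by (simp add: sum_distrib_left)
qed

lemma poly_qrev:
  assumes "x \<noteq> 0"
  shows "poly (qrev_poly N a) x = x ^ (N - 1) * qfun N a (1 / x)"
proof -
  have "poly (qrev_poly N a) x = (\<Sum>j=1..N. complex_of_real (a j) * x ^ (N - j))"
    unfolding qrev_poly_def by (simp add: poly_sum poly_monom)
  also have "\<dots> = (\<Sum>j=1..N. x ^ (N - 1) * (complex_of_real (a j) * (1/x) ^ (j - 1)))"
  proof (rule sum.cong)
    fix j assume "j \<in> {1..N}"
    then have "x ^ (N - 1) = x ^ (N - j) * x ^ (j - 1)" by (simp add: power_add[symmetric])
    then show "complex_of_real (a j) * x ^ (N - j) = x ^ (N - 1) * (complex_of_real (a j) * (1/x) ^ (j - 1))"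
      using assms by (simp add: power_divide field_simps)
  qed simp
  finally show ?thesis unfolding qfun_def by (simp add: sum_distrib_left)
qed

lemma aux_alg: "((y::complex) * A) ^ T - C * (y ^ T * (z * Q)) = y ^ T * (A ^ T - C * z * Q)"
  by (simp add: power_mult_distrib algebra_simps)

lemma poly_fac:
  assumes "x \<noteq> 0" "T > 0" "N > 0"
  shows "poly (fac N T \<gamma> a b u) x = x ^ (N * T) *
     ((1 - complex_of_real \<gamma> * pfun N b (1/x)) ^ T
      - complex_of_real ((1 - \<gamma>) ^ T) * u * (1/x) * qfun N a (1/x) ^ T)"
proof -
  have e1: "x ^ N - complex_of_real \<gamma> * (x ^ N * pfun N b (1 / x)) = x^N * (1 - complex_of_real \<gamma> * pfun N b (1/x))"
    by (simp add: algebra_simps)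
  have e2: "x ^ (T - 1) * (x ^ (N - 1) * qfun N a (1 / x)) ^ T = x ^ (N * T) * ((1/x) * qfun N a (1/x) ^ T)"
  proof -
    have E: "x ^ (T - 1) * (x ^ (N - 1)) ^ T * x = x ^ (N * T)"
    proof -
      have "x ^ (T - 1) * (x ^ (N - 1)) ^ T * x = x ^ (T - 1 + (N - 1) * T + 1)"
        by (simp only: power_add power_mult power_one_right)
      also have "T - 1 + (N - 1) * T + 1 = N * T" using assms by (cases T; cases N) auto
      finally show ?thesis .
    qed
    have E': "x ^ (T - 1) * (x ^ (N - 1)) ^ T = x ^ (N * T) * (1/x)"
    proof -
      have "x ^ (T - 1) * (x ^ (N - 1)) ^ T = x ^ (T - 1) * (x ^ (N - 1)) ^ T * x * (1/x)"
        using assms by simp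
      also have "\<dots> = x ^ (N * T) * (1/x)" by (simp only: E)
      finally show ?thesis .
    qed
    show ?thesis by (simp only: power_mult_distrib mult.assoc[symmetric] E')
  qed
  have "poly (fac N T \<gamma> a b u) x = (x ^ N - complex_of_real \<gamma> * (x ^ N * pfun N b (1 / x))) ^ T
     - (complex_of_real ((1 - \<gamma>) ^ T) * u) * (x ^ (T - 1) * (x ^ (N - 1) * qfun N a (1 / x)) ^ T)"
    unfolding fac_def using assms by (simp add: poly_monom poly_prev poly_qrev)
  also have "\<dots> = (x ^ N * (1 - complex_of_real \<gamma> * pfun N b (1/x))) ^ T
     - (complex_of_real ((1 - \<gamma>) ^ T) * u) * (x ^ (N * T) * ((1/x) * qfun N a (1/x) ^ T))"
    by (simp only: e1 e2)
  also have "\<dots> = x ^ (N * T) *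
     ((1 - complex_of_real \<gamma> * pfun N b (1/x)) ^ T
      - complex_of_real ((1 - \<gamma>) ^ T) * u * (1/x) * qfun N a (1/x) ^ T)"
    unfolding power_mult by (rule aux_alg)
  finally show ?thesis .
qed

lemma pfun_bound:
  assumes "\<And>j. j \<in> {1..N} \<Longrightarrow> 0 \<le> b j \<and> b j \<le> 1" "(\<Sum>j=1..N. b j) = 1" "cmod z \<le> 1"
  shows "cmod (pfun N b z) \<le> 1"
proof -
  have "cmod (pfun N b z) \<le> (\<Sum>j=1..N. cmod (complex_of_real (b j) * z ^ j))"
    unfolding pfun_def by (rule norm_sum)
  also have "\<dots> \<le> (\<Sum>j=1..N. b j)"
  proof (rule sum_mono)
    fix j assume j: "j \<in> {1..N}"
    have "cmod z ^ j \<le> 1" using assms(3) by (simp add: power_le_one)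
    then show "cmod (complex_of_real (b j) * z ^ j) \<le> b j"
      using assms(1)[OF j] by (simp add: norm_mult norm_power mult_left_le)
  qed
  finally show ?thesis using assms(2) by simp
qed

lemma denom_nz:
  assumes "\<And>j. j \<in> {1..N} \<Longrightarrow> 0 \<le> b j \<and> b j \<le> 1" "(\<Sum>j=1..N. b j) = 1" "cmod z \<le> 1"
    "0 \<le> \<gamma>" "\<gamma> < 1"
  shows "1 - complex_of_real \<gamma> * pfun N b z \<noteq> 0"
proof
  assume h: "1 - complex_of_real \<gamma> * pfun N b z = 0"
  have "cmod (complex_of_real \<gamma> * pfun N b z) \<le> \<gamma>"
    using pfun_bound[OF assms(1-3)] assms(4) by (simp add: norm_mult mult_left_le)
  moreover have "complex_of_real \<gamma> * pfun N b z = 1" using h by simp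
  ultimately show False using assms(5) by simp
qed

lemma cnj_Phi: "cnj (Phi N T \<gamma> a b z) = Phi N T \<gamma> a b (cnj z)"
  unfolding Phi_def qfun_def pfun_def by (simp add: cnj_sum)

lemma cond_iff:
  "Some u \<in> ext_inv ` (UNIV - Some ` S) \<longleftrightarrow> (u = 0 \<or> 1 / cnj u \<notin> S)"
proof
  assume "Some u \<in> ext_inv ` (UNIV - Some ` S)"
  then obtain w where w: "w \<notin> Some ` S" "Some u = ext_inv w" by auto
  show "u = 0 \<or> 1 / cnj u \<notin> S"
  proof (cases w)
    case None then show ?thesis using w by (simp add: ext_inv_def)
  next
    case (Some v)
    then have "v \<noteq> 0" "u = 1 / cnj v" using w by (auto simp: ext_inv_def split: if_splits)
    then have "v = 1 / cnj u" by simp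
    then show ?thesis using w Some by auto
  qed
next
  assume h: "u = 0 \<or> 1 / cnj u \<notin> S"
  show "Some u \<in> ext_inv ` (UNIV - Some ` S)"
  proof (cases "u = 0")
    case True
    then show ?thesis by (intro image_eqI[of _ _ None]) (auto simp: ext_inv_def)
  next
    case False
    then show ?thesis using h
      by (intro image_eqI[of _ _ "Some (1 / cnj u)"]) (auto simp: ext_inv_def)
  qed
qed

lemma fac_iff:
  assumes "N > 0" and "T > 0" and "0 \<le> \<gamma>" and "\<gamma> < 1"
    and B: "\<And>j. j \<in> {1..N} \<Longrightarrow> 0 \<le> b j \<and> b j \<le> 1" and Bs: "(\<Sum>j=1..N. b j) = 1"
  shows "(\<forall>x. poly (fac N T \<gamma> a b u) x = 0 \<longrightarrow> cmod x < 1) \<longleftrightarrow>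
         (u = 0 \<or> 1 / cnj u \<notin> Phi N T \<gamma> a b ` cball 0 1)"
proof
  assume L: "\<forall>x. poly (fac N T \<gamma> a b u) x = 0 \<longrightarrow> cmod x < 1"
  show "u = 0 \<or> 1 / cnj u \<notin> Phi N T \<gamma> a b ` cball 0 1"
  proof (rule ccontr)
    assume "\<not> ?thesis"
    then obtain z0 where u0: "u \<noteq> 0" and z0: "cmod z0 \<le> 1" and ph0: "1 / cnj u = Phi N T \<gamma> a b z0"
      by auto
    define z where "z = cnj z0"
    have zn: "cmod z \<le> 1" using z0 by (simp add: z_def)
    have ph: "Phi N T \<gamma> a b z = 1 / u"
      using arg_cong[OF ph0, of cnj] by (simp add: cnj_Phi z_def)
    have z0': "z \<noteq> 0" using ph u0 by (auto simp: Phi_def)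
    define D where "D = 1 - complex_of_real \<gamma> * pfun N b z"
    have D: "D \<noteq> 0" unfolding D_def by (rule denom_nz[OF B Bs zn assms(3,4)])
    have eq: "complex_of_real ((1 - \<gamma>) ^ T) * u * z * qfun N a z ^ T = D ^ T"
      using ph D u0 unfolding Phi_def D_def[symmetric] by (simp add: field_simps)
    define x where "x = 1 / z"
    have x0: "x \<noteq> 0" and zx: "1 / x = z" using z0' by (auto simp: x_def)
    have "poly (fac N T \<gamma> a b u) x = 0"
      using eq unfolding poly_fac[OF x0 assms(2,1)] zx D_def by simp
    with L have "cmod x < 1" by blast
    moreover have "cmod x \<ge> 1" using zn z0' by (simp add: x_def norm_divide field_simps)
    ultimately show False by simp
  qed
next
  assume R: "u = 0 \<or> 1 / cnj u \<notin> Phi N T \<gamma> a b ` cball 0 1"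
  show "\<forall>x. poly (fac N T \<gamma> a b u) x = 0 \<longrightarrow> cmod x < 1"
  proof (intro allI impI, rule ccontr)
    fix x assume P: "poly (fac N T \<gamma> a b u) x = 0" and nx: "\<not> cmod x < 1"
    have x0: "x \<noteq> 0" using nx by auto
    define z where "z = 1 / x"
    have zn: "cmod z \<le> 1" using nx x0 by (simp add: z_def norm_divide field_simps)
    have z0: "z \<noteq> 0" using x0 by (simp add: z_def)
    define D where "D = 1 - complex_of_real \<gamma> * pfun N b z"
    have D: "D \<noteq> 0" unfolding D_def by (rule denom_nz[OF B Bs zn assms(3,4)])
    have eq: "D ^ T = complex_of_real ((1 - \<gamma>) ^ T) * u * z * qfun N a z ^ T"
      using P x0 unfolding poly_fac[OF x0 assms(2,1)] z_def[symmetric] D_def[symmetric] by simp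
    have u0: "u \<noteq> 0" using eq D by auto
    define K where "K = complex_of_real ((1 - \<gamma>) ^ T) * z * qfun N a z ^ T"
    have eqK: "D ^ T = u * K" using eq unfolding K_def by (simp add: ac_simps)
    have nz: "K \<noteq> 0" using eqK D by auto
    have "Phi N T \<gamma> a b z = K / D ^ T" unfolding Phi_def D_def K_def by simp
    also have "\<dots> = K / (u * K)" using eqK by simp
    also have "\<dots> = 1 / u" using nz by simp
    finally have ph: "Phi N T \<gamma> a b z = 1 / u" .
    have "Phi N T \<gamma> a b (cnj z) = 1 / cnj u"
      using arg_cong[OF ph, of cnj] by (simp add: cnj_Phi)
    moreover have "cnj z \<in> cball 0 1" using zn by simp
    ultimately show False using R u0 by (metis image_eqI)
  qed
qed

theorem lemma3:
  fixes m N T :: nat and \<gamma> :: real and a b :: "nat \<Rightarrow> real" and \<mu> :: "nat \<Rightarrow> complex"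
  assumes "m > 0" and "N > 0" and "T > 0"
    and "0 \<le> \<gamma>" and "\<gamma> < 1"
    and "\<And>j. j \<in> {1..N} \<Longrightarrow> 0 \<le> a j \<and> a j \<le> 1"
    and "\<And>j. j \<in> {1..N} \<Longrightarrow> 0 \<le> b j \<and> b j \<le> 1"
    and "(\<Sum>j=1..N. a j) = 1" and "(\<Sum>j=1..N. b j) = 1"
  shows "(\<forall>z. poly (ftilde m N T \<gamma> a b \<mu>) z = 0 \<longrightarrow> cmod z < 1) \<longleftrightarrow>
         (\<forall>j\<in>{1..m}. Some (\<mu> j) \<in>
            ext_inv ` (UNIV - Some ` (Phi N T \<gamma> a b ` cball 0 1)))"
proof -
  have "(\<forall>z. poly (ftilde m N T \<gamma> a b \<mu>) z = 0 \<longrightarrow> cmod z < 1) \<longleftrightarrow>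
        (\<forall>j\<in>{1..m}. \<forall>z. poly (fac N T \<gamma> a b (\<mu> j)) z = 0 \<longrightarrow> cmod z < 1)"
    unfolding ftilde_fac poly_prod by auto
  also have "\<dots> \<longleftrightarrow> (\<forall>j\<in>{1..m}. Some (\<mu> j) \<in>
            ext_inv ` (UNIV - Some ` (Phi N T \<gamma> a b ` cball 0 1)))"
    using fac_iff[OF assms(2,3,4,5,7,9)] cond_iff by simp
  finally show ?thesis .
qed

end
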